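(* There exists a linear symplectic coordinate transform generated by an orthogonal rotation matrix $T\in SO(2)$ (acting as $\bar W=TW$, $\bar w=Tw$) depending only on the masses $m=(m_1,m_2,m_3)$ and the charges $e_1,e_2,e_3$ such that under this transformation the lower right $2\times2$ sub-matrix of $B_2(\theta)$ in the system $\begin{pmatrix}\dot{\bar W}\\ \dot{\bar w}\end{pmatrix}=JB_2(\theta)\begin{pmatrix}\bar W\\ \bar w\end{pmatrix}$ is diagonalized, and $B_2(\theta)$ becomes $$\bar B_2(\theta)=\begin{pmatrix}1&0&0&1\\0&1&-1&0\\0&-1&\frac{2e\cos\theta-1-\sqrt{9-\beta}}{2(1+e\cos\theta)}&0\\1&0&0&\frac{2e\cos\theta-1+\sqrt{9-\beta}}{2(1+e\cos\theta)}\end{pmatrix},$$ where $\beta=36(m_2m_3\sin^2\theta_1+m_3m_1\sin^2\theta_2+m_1m_2\sin^2\theta_3)$.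
   Context: Charged planar three-body problem with masses $m_i>0$, $m_1+m_2+m_3=1$, non-collinear central configuration with inner angles $\theta_1,\theta_2,\theta_3$, eccentricity $e\in[0,1)$, true anomaly $\theta$. $I$ is the $2\times2$ identity and $J=\begin{pmatrix}0&-1\\1&0\end{pmatrix}$ (the standard symplectic matrix on $\mathbb{R}^4$ in the ODE). The essential part of the linearized system at the elliptic triangle solution has coefficient matrix $B_2(\theta)=\begin{pmatrix}I&-J\\ J&\frac{e\cos\theta\, I+\tilde D}{1+e\cos\theta}\end{pmatrix}$ with $\tilde D=\begin{pmatrix}1-3d_1&-3d_2\\-3d_2&1-3d_4\end{pmatrix}$, where $d_1=m_1\cos^2(\theta_2-\theta_3)+m_2\cos^2\theta_2+m_3\cos^2\theta_3$, $d_2=m_1\cos(\theta_2-\theta_3)\sin(\theta_2-\theta_3)+m_2\cos\theta_2\sin\theta_2-m_3\cos\theta_3\sin\theta_3$, $d_4=m_1\sin^2(\theta_2-\theta_3)+m_2\sin^2\theta_2+m_3\sin^2\theta_3$. *)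

theory Defs
  imports Complex_Main "Jordan_Normal_Form.Determinant"
begin

definition mat2 :: "real \<Rightarrow> real \<Rightarrow> real \<Rightarrow> real \<Rightarrow> real mat" where
  "mat2 a b c d = mat_of_rows_list 2 [[a, b], [c, d]]"

definition J2 :: "real mat" where
  "J2 = mat2 0 (-1) 1 0"

definition J4 :: "real mat" where
  "J4 = four_block_mat (0\<^sub>m 2 2) (- 1\<^sub>m 2) (1\<^sub>m 2) (0\<^sub>m 2 2)"

definition d1 :: "real \<Rightarrow> real \<Rightarrow> real \<Rightarrow> real \<Rightarrow> real \<Rightarrow> real" where
  "d1 m1 m2 m3 th2 th3 = m1 * (cos (th2 - th3))^2 + m2 * (cos th2)^2 + m3 * (cos th3)^2"

definition d2 :: "real \<Rightarrow> real \<Rightarrow> real \<Rightarrow> real \<Rightarrow> real \<Rightarrow> real" where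
  "d2 m1 m2 m3 th2 th3 = m1 * cos (th2 - th3) * sin (th2 - th3) + m2 * cos th2 * sin th2
      - m3 * cos th3 * sin th3"

definition d4 :: "real \<Rightarrow> real \<Rightarrow> real \<Rightarrow> real \<Rightarrow> real \<Rightarrow> real" where
  "d4 m1 m2 m3 th2 th3 = m1 * (sin (th2 - th3))^2 + m2 * (sin th2)^2 + m3 * (sin th3)^2"

definition Dtilde :: "real \<Rightarrow> real \<Rightarrow> real \<Rightarrow> real \<Rightarrow> real \<Rightarrow> real mat" where
  "Dtilde m1 m2 m3 th2 th3 =
     mat2 (1 - 3 * d1 m1 m2 m3 th2 th3) (- 3 * d2 m1 m2 m3 th2 th3)
          (- 3 * d2 m1 m2 m3 th2 th3) (1 - 3 * d4 m1 m2 m3 th2 th3)"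

text \<open>Coefficient matrix B_2(theta) of the essential part; e = eccentricity, th = true anomaly.\<close>
definition B2 :: "real \<Rightarrow> real \<Rightarrow> real \<Rightarrow> real \<Rightarrow> real \<Rightarrow> real \<Rightarrow> real \<Rightarrow> real mat" where
  "B2 m1 m2 m3 th2 th3 e th =
     four_block_mat (1\<^sub>m 2) (- J2) J2
       ((1 / (1 + e * cos th)) \<cdot>\<^sub>m ((e * cos th) \<cdot>\<^sub>m 1\<^sub>m 2 + Dtilde m1 m2 m3 th2 th3))"

definition beta :: "real \<Rightarrow> real \<Rightarrow> real \<Rightarrow> real \<Rightarrow> real \<Rightarrow> real \<Rightarrow> real" where
  "beta m1 m2 m3 th1 th2 th3 =
     36 * (m2 * m3 * (sin th1)^2 + m3 * m1 * (sin th2)^2 + m1 * m2 * (sin th3)^2)"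

definition B2bar :: "real \<Rightarrow> real \<Rightarrow> real \<Rightarrow> real \<Rightarrow> real \<Rightarrow> real \<Rightarrow> real \<Rightarrow> real \<Rightarrow> real mat" where
  "B2bar m1 m2 m3 th1 th2 th3 e th =
     mat_of_rows_list 4
      [[1, 0, 0, 1],
       [0, 1, -1, 0],
       [0, -1, (2 * e * cos th - 1 - sqrt (9 - beta m1 m2 m3 th1 th2 th3)) / (2 * (1 + e * cos th)), 0],
       [1, 0, 0, (2 * e * cos th - 1 + sqrt (9 - beta m1 m2 m3 th1 th2 th3)) / (2 * (1 + e * cos th))]]"

definition blockdiag2 :: "real mat \<Rightarrow> real mat" where
  "blockdiag2 T = four_block_mat T (0\<^sub>m 2 2) (0\<^sub>m 2 2) T"

end

theory Submission
  imports Defs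
begin

lemma mol_mult: fixes a00 a01 a02 a03 a10 a11 a12 a13 a20 a21 a22 a23 a30 a31 a32 a33 b00 b01 b02 b03 b10 b11 b12 b13 b20 b21 b22 b23 b30 b31 b32 b33 :: real
  shows "mat_of_rows_list 4 [[a00, a01, a02, a03], [a10, a11, a12, a13], [a20, a21, a22, a23], [a30, a31, a32, a33]] * mat_of_rows_list 4 [[b00, b01, b02, b03], [b10, b11, b12, b13], [b20, b21, b22, b23], [b30, b31, b32, b33]] = mat_of_rows_list 4 [[a00*b00 + a01*b10 + a02*b20 + a03*b30, a00*b01 + a01*b11 + a02*b21 + a03*b31, a00*b02 + a01*b12 + a02*b22 + a03*b32, a00*b03 + a01*b13 + a02*b23 + a03*b33], [a10*b00 + a11*b10 + a12*b20 + a13*b30, a10*b01 + a11*b11 + a12*b21 + a13*b31, a10*b02 + a11*b12 + a12*b22 + a13*b32, a10*b03 + a11*b13 + a12*b23 + a13*b33], [a20*b00 + a21*b10 + a22*b20 + a23*b30, a20*b01 + a21*b11 + a22*b21 + a23*b31, a20*b02 + a21*b12 + a22*b22 + a23*b32, a20*b03 + a21*b13 + a22*b23 + a23*b33], [a30*b00 + a31*b10 + a32*b20 + a33*b30, a30*b01 + a31*b11 + a32*b21 + a33*b31, a30*b02 + a31*b12 + a32*b22 + a33*b32, a30*b03 + a31*b13 + a32*b23 + a33*b33]]"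
  by (rule eq_matI) (auto simp: mat_of_rows_list_def less_Suc_eq scalar_prod_def numeral_eq_Suc atLeast0LessThan lessThan_Suc)

lemma mol_transpose: fixes a00 a01 a02 a03 a10 a11 a12 a13 a20 a21 a22 a23 a30 a31 a32 a33 :: real
  shows "transpose_mat (mat_of_rows_list 4 [[a00, a01, a02, a03], [a10, a11, a12, a13], [a20, a21, a22, a23], [a30, a31, a32, a33]]) = mat_of_rows_list 4 [[a00, a10, a20, a30], [a01, a11, a21, a31], [a02, a12, a22, a32], [a03, a13, a23, a33]]"
  by (rule eq_matI) (auto simp: mat_of_rows_list_def less_Suc_eq numeral_eq_Suc)

lemma conj4:
  fixes u v p q r :: real
  shows "mat_of_rows_list 4 [[u,v,0,0],[-v,u,0,0],[0,0,u,v],[0,0,-v,u]] * mat_of_rows_list 4 [[1,0,0,1],[0,1,-1,0],[0,-1,p,q],[1,0,q,r]] * transpose_mat (mat_of_rows_list 4 [[u,v,0,0],[-v,u,0,0],[0,0,u,v],[0,0,-v,u]])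
   = mat_of_rows_list 4 [[u^2+v^2,0,0,u^2+v^2],[0,u^2+v^2,-(u^2+v^2),0],
      [0,-(u^2+v^2),p*u^2+2*q*u*v+r*v^2, q*(u^2-v^2)+(r-p)*u*v],
      [u^2+v^2,0,q*(u^2-v^2)+(r-p)*u*v, p*v^2-2*q*u*v+r*u^2]]"
  unfolding mol_transpose mol_mult by (simp add: power2_eq_square algebra_simps)
lemma det1: "(A :: real mat) \<in> carrier_mat 1 1 \<Longrightarrow> det A = A $$ (0,0)"
  by (subst det_upper_triangular[of A 1]) (auto simp: upper_triangular_def diag_mat_def)
lemma mat2_carrier: "mat2 a b c d \<in> carrier_mat 2 2"
  unfolding mat2_def mat_of_rows_list_def carrier_mat_def by (simp add: numeral_eq_Suc)
lemma mat2_dims: "dim_row (mat2 a b c d) = 2" "dim_col (mat2 a b c d) = 2"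
  using mat2_carrier[of a b c d] by auto
lemma mat2_idx: "mat2 a b c d $$ (0,0) = a" "mat2 a b c d $$ (0,1) = b" "mat2 a b c d $$ (1,0) = c" "mat2 a b c d $$ (1,1) = d"
  unfolding mat2_def mat_of_rows_list_def by auto
lemmas mat2_idxS = mat2_idx[unfolded One_nat_def]
lemma q1: "mat_delete (mat2 a b c d) i 0 \<in> carrier_mat 1 1"
    using mat_delete_carrier[OF mat2_carrier, of a b c d i 0] by simp
lemma q2: "det (mat2 a b c d) = (\<Sum>i<2. mat2 a b c d $$ (i,0) * cofactor (mat2 a b c d) i 0)"
    by (rule laplace_expansion_column[OF mat2_carrier]) simp
lemma q3: "(\<Sum>i<2. mat2 a b c d $$ (i,0) * cofactor (mat2 a b c d) i 0) = a * det (mat_delete (mat2 a b c d) 0 0) - c * det (mat_delete (mat2 a b c d) 1 0)"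
    using mat2_idx(3)[of a b c d, unfolded One_nat_def] by (simp add: cofactor_def numeral_2_eq_2 mat2_idx)
lemma q4: "mat_delete (mat2 a b c d) 0 0 $$ (0,0) = d" "mat_delete (mat2 a b c d) 1 0 $$ (0,0) = b"
  unfolding mat_delete_def by (simp_all add: mat2_dims mat2_idx mat2_idxS)
lemma det2: "det (mat2 a b c d) = a * d - b * c"
  unfolding q2 q3 det1[OF q1] q4 by simp
lemma lag: fixes m1 m2 m3 a b c d e f :: real shows
 "(m1 * a^2 + m2 * c^2 + m3 * e^2) * (m1 * b^2 + m2 * d^2 + m3 * f^2) - (m1 * a * b + m2 * c * d - m3 * e * f)^2
  = m1*m2*(a*d - c*b)^2 + m1*m3*(a*f+e*b)^2 + m2*m3*(d*e+c*f)^2"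
  by (simp add: power2_eq_square algebra_simps)
lemma key:
  fixes m1 m2 m3 th1 th2 th3 :: real
  assumes "th1 + th2 + th3 = pi"
  shows "d1 m1 m2 m3 th2 th3 * d4 m1 m2 m3 th2 th3 - (d2 m1 m2 m3 th2 th3)^2 = beta m1 m2 m3 th1 th2 th3 / 36"
proof -
  define C1 S1 where "C1 = cos (th2 - th3)" "S1 = sin (th2 - th3)"
  have t1: "th1 = pi - (th2 + th3)" using assms by simp
  have s1: "sin th1 = sin th2 * cos th3 + cos th2 * sin th3" unfolding t1 by (simp add: sin_add)
  have e1: "C1 * sin th2 - cos th2 * S1 = sin th3"
  proof -
    have "sin th3 = sin (th2 - (th2 - th3))" by simp
    also have "\<dots> = C1 * sin th2 - cos th2 * S1" unfolding sin_diff[of th2 "th2 - th3"] C1_S1_def by simp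
    finally show ?thesis by simp
  qed
  have e2: "C1 * sin th3 + cos th3 * S1 = sin th2"
  proof -
    have "sin th2 = sin ((th2 - th3) + th3)" by simp
    also have "\<dots> = C1 * sin th3 + cos th3 * S1" unfolding sin_add C1_S1_def by simp
    finally show ?thesis by simp
  qed
  have L: "d1 m1 m2 m3 th2 th3 * d4 m1 m2 m3 th2 th3 - (d2 m1 m2 m3 th2 th3)^2
     = m1*m2*(C1 * sin th2 - cos th2 * S1)^2 + m1*m3*(C1 * sin th3 + cos th3 * S1)^2
       + m2*m3*(sin th2 * cos th3 + cos th2 * sin th3)^2"
    unfolding d1_def d2_def d4_def C1_S1_def[symmetric] lag by simp
  show ?thesis unfolding L e1 e2 s1[symmetric] beta_def by simp
qed

lemma mat2_eqI: assumes "A \<in> carrier_mat 2 2" "A $$ (0,0) = a" "A $$ (0,1) = b" "A $$ (1,0) = c" "A $$ (1,1) = d" shows "A = mat2 a b c d"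
proof (rule eq_matI)
  show "dim_row A = dim_row (mat2 a b c d)" "dim_col A = dim_col (mat2 a b c d)" using assms(1) mat2_dims by auto
  fix i j assume "i < dim_row (mat2 a b c d)" "j < dim_col (mat2 a b c d)"
  hence "i < 2" "j < 2" using mat2_dims by auto
  hence "(i = 0 \<or> i = 1) \<and> (j = 0 \<or> j = 1)" by auto
  thus "A $$ (i, j) = mat2 a b c d $$ (i, j)" using assms mat2_idx by auto
qed

lemma one2: "(1\<^sub>m 2 :: real mat) = mat2 1 0 0 1"
  by (rule mat2_eqI) auto
lemma zero2: "(0\<^sub>m 2 2 :: real mat) = mat2 0 0 0 0"
  by (rule mat2_eqI) auto
lemma uminus2: "- mat2 a b c d = mat2 (-a) (-b) (-c) (-d)"
  by (rule mat2_eqI) (auto simp: mat2_idx mat2_idxS mat2_dims mat2_carrier)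
lemma lr2: "k \<cdot>\<^sub>m (x \<cdot>\<^sub>m 1\<^sub>m 2 + mat2 a b c d) = mat2 (k*(x+a)) (k*b) (k*c) (k*(x+d))"
  by (rule mat2_eqI) (auto simp: mat2_idx mat2_idxS mat2_dims mat2_carrier)
lemma transp2: "transpose_mat (mat2 a b c d) = mat2 a c b d"
  by (rule mat2_eqI) (auto simp: mat2_idx mat2_idxS mat2_dims mat2_carrier)
lemma mult2: "mat2 a b c d * mat2 a' b' c' d' = mat2 (a*a'+b*c') (a*b'+b*d') (c*a'+d*c') (c*b'+d*d')"
  by (rule mat2_eqI) (auto simp: mat2_idx mat2_idxS mat2_dims mat2_carrier
     scalar_prod_def numeral_eq_Suc atLeast0LessThan lessThan_Suc)

lemma fb4: "four_block_mat (mat2 a00 a01 a10 a11) (mat2 b00 b01 b10 b11) (mat2 c00 c01 c10 c11) (mat2 d00 d01 d10 d11)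
  = mat_of_rows_list 4 [[a00,a01,b00,b01],[a10,a11,b10,b11],[c00,c01,d00,d01],[c10,c11,d10,d11]]"
  by (rule eq_matI) (auto simp: mat2_def mat_of_rows_list_def less_Suc_eq numeral_eq_Suc)

theorem theorem3p5:
  fixes m1 m2 m3 th1 th2 th3 :: real
  assumes "m1 > 0" and "m2 > 0" and "m3 > 0" and "m1 + m2 + m3 = 1"
    and "th1 > 0" and "th2 > 0" and "th3 > 0" and "th1 + th2 + th3 = pi"
  shows "\<exists>T. T \<in> carrier_mat 2 2 \<and> transpose_mat T * T = 1\<^sub>m 2 \<and> det T = 1
          \<and> transpose_mat (blockdiag2 T) * J4 * blockdiag2 T = J4
          \<and> (\<forall>e th. 0 \<le> e \<and> e < 1 \<longrightarrow>
               blockdiag2 T * B2 m1 m2 m3 th2 th3 e th * transpose_mat (blockdiag2 T)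
                 = B2bar m1 m2 m3 th1 th2 th3 e th)"
proof -
  define D1 where "D1 = d1 m1 m2 m3 th2 th3"
  define D2 where "D2 = d2 m1 m2 m3 th2 th3"
  define D4 where "D4 = d4 m1 m2 m3 th2 th3"
  define bt where "bt = beta m1 m2 m3 th1 th2 th3"
  define a where "a = 1 - 3 * D1"
  define b where "b = - 3 * D2"
  define c where "c = 1 - 3 * D4"
  have k: "D1 * D4 - D2^2 = bt / 36" unfolding D1_def D2_def D4_def bt_def by (rule key[OF assms(8)])
  have sum14: "D1 + D4 = 1"
    unfolding D1_def D4_def d1_def d4_def cos_squared_eq using assms(4) by (simp add: algebra_simps)
  have ac: "a + c = -1" using sum14 unfolding a_def c_def by linarith
  have disc: "9 - bt = (a - c)^2 + 4 * b^2"
  proof -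
    have "(a - c)^2 + 4 * b^2 = 9 * (D1 + D4)^2 - 36 * (D1 * D4 - D2^2)"
      unfolding a_def b_def c_def by (simp add: power2_eq_square algebra_simps)
    thus ?thesis using k sum14 by simp
  qed
  define s where "s = sqrt (9 - bt)"
  have s0: "s \<ge> 0" unfolding s_def disc by simp
  have ss: "s^2 = (a - c)^2 + 4 * b^2" unfolding s_def disc by simp
  define X where "X = (c - a) / s"
  define Y where "Y = - 2 * b / s"
  have XY: "s > 0 \<Longrightarrow> X^2 + Y^2 = 1"
  proof -
    assume sp: "s > 0"
    have "X^2 + Y^2 = ((c-a)^2 + (2*b)^2) / s^2"
      unfolding X_def Y_def by (simp add: power_divide add_divide_distrib)
    also have "(c-a)^2 + (2*b)^2 = s^2" using ss by (simp add: power2_commute power_mult_distrib)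
    finally show ?thesis using sp by simp
  qed
  have Xb: "X^2 \<le> 1"
  proof (cases "s > 0")
    case True thus ?thesis using XY[OF True] by (smt (verit) zero_le_power2)
  next
    case False hence "s = 0" using s0 by simp
    thus ?thesis unfolding X_def by simp
  qed
  have X1: "-1 \<le> X" "X \<le> 1" using Xb abs_le_square_iff[of X 1] by auto
  define u where "u = sqrt ((1 + X) / 2)"
  define v where "v = (if Y \<ge> 0 then sqrt ((1 - X) / 2) else - sqrt ((1 - X) / 2))"
  have u2: "u^2 = (1 + X) / 2" unfolding u_def using X1 by simp
  have v2: "v^2 = (1 - X) / 2" unfolding v_def using X1 by simp
  have uv1: "u^2 + v^2 = 1" using u2 v2 by simp
  have uvd: "u^2 - v^2 = X" using u2 v2 by simp
  have uvp: "s > 0 \<Longrightarrow> 2 * u * v = Y"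
  proof -
    assume sp: "s > 0"
    have "(2 * u * v)^2 = 4 * u^2 * v^2" by (simp add: power_mult_distrib)
    also have "\<dots> = 1 - X^2" unfolding u2 v2 by (simp add: power2_eq_square field_simps)
    also have "\<dots> = Y^2" using XY[OF sp] by simp
    finally have "(2 * u * v)^2 = Y^2" .
    moreover have "(2 * u * v \<ge> 0) = (Y \<ge> 0)"
    proof -
      have "u \<ge> 0" unfolding u_def using X1 by simp
      show ?thesis
      proof (cases "Y \<ge> 0")
        case True thus ?thesis using \<open>u \<ge> 0\<close> X1 unfolding v_def by simp
      next
        case False
        hence "Y^2 > 0" by simp
        hence "2*u*v \<noteq> 0" using \<open>(2 * u * v)^2 = Y^2\<close> by auto
        moreover have "v \<le> 0" using False X1 unfolding v_def by simp
        ultimately show ?thesis using False \<open>u \<ge> 0\<close>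
          by (smt (verit) mult_nonneg_nonpos mult_nonneg_nonneg)
      qed
    qed
    ultimately show ?thesis by (smt (verit) power2_eq_iff)
  qed
  have z: "s = 0 \<Longrightarrow> a = c \<and> b = 0"
  proof -
    assume "s = 0"
    hence "(a - c)^2 + 4 * b^2 = 0" using ss by simp
    hence "(a - c)^2 = 0" "b^2 = 0" by (smt (verit) zero_le_power2)+
    thus "a = c \<and> b = 0" by simp
  qed
  have R1: "s * (u^2 - v^2) = c - a" and R2: "s * (2 * u * v) = - 2 * b"
  proof -
    have "s * (u^2 - v^2) = c - a \<and> s * (2 * u * v) = - 2 * b"
    proof (cases "s > 0")
      case True
      thus ?thesis using uvd uvp[OF True] unfolding X_def Y_def by simp
    next
      case False hence "s = 0" using s0 by simp
      thus ?thesis using z by simp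
    qed
    thus "s * (u^2 - v^2) = c - a" "s * (2 * u * v) = - 2 * b" by auto
  qed
  have G: "(a-c)*(u^2-v^2) + 2*b*(2*u*v) = - s"
  proof (cases "s > 0")
    case True
    have "s * ((a-c)*(u^2-v^2) + 2*b*(2*u*v)) = (a-c)*(s*(u^2-v^2)) + 2*b*(s*(2*u*v))"
      by (simp add: algebra_simps)
    also have "\<dots> = (a-c)*(c-a) + 2*b*(-2*b)" unfolding R1 R2 ..
    also have "\<dots> = - ((a-c)^2 + 4*b^2)" by (simp add: power2_eq_square algebra_simps)
    also have "\<dots> = s * (- s)" unfolding ss[symmetric] by (simp add: power2_eq_square)
    finally have eq: "s * ((a-c)*(u^2-v^2) + 2*b*(2*u*v)) = s * (- s)" .
    have "s \<noteq> 0" using True by simp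
    thus ?thesis using eq mult_left_cancel by blast
  next
    case False hence "s = 0" using s0 by simp
    thus ?thesis using z by simp
  qed
  have H: "b*(u^2-v^2) + (c-a)*u*v = 0"
  proof (cases "s > 0")
    case True
    have "2 * (s * (b*(u^2-v^2) + (c-a)*u*v)) = 2*b*(s*(u^2-v^2)) + (c-a)*(s*(2*u*v))"
      by (simp add: algebra_simps)
    also have "\<dots> = 2*b*(c-a) + (c-a)*(-2*b)" unfolding R1 R2 ..
    finally have "s * (b*(u^2-v^2) + (c-a)*u*v) = 0" by simp
    thus ?thesis using True by simp
  next
    case False hence "s = 0" using s0 by simp
    thus ?thesis using z by simp
  qed
  have F1: "a*u^2 + 2*b*u*v + c*v^2 = (-1 - s)/2"
  proof -
    have "2*(a*u^2 + 2*b*u*v + c*v^2) = (a+c)*(u^2+v^2) + ((a-c)*(u^2-v^2) + 2*b*(2*u*v))"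
      by (simp add: algebra_simps power2_eq_square)
    thus ?thesis using ac uv1 G by simp
  qed
  have F2: "a*v^2 - 2*b*u*v + c*u^2 = (-1 + s)/2"
  proof -
    have "2*(a*v^2 - 2*b*u*v + c*u^2) = (a+c)*(u^2+v^2) - ((a-c)*(u^2-v^2) + 2*b*(2*u*v))"
      by (simp add: algebra_simps power2_eq_square)
    thus ?thesis using ac uv1 G by simp
  qed
  have uvm: "- (u * u) - v * v = -1" using uv1 by (simp add: power2_eq_square)
  have uvm': "- (v * v) - u * u = -1" using uv1 by (simp add: power2_eq_square)
  have uv1': "u * u + v * v = 1" and uv1'': "v * v + u * u = 1" using uv1 by (simp_all add: power2_eq_square)
  define T where "T = mat2 u v (-v) u"
  have bd: "blockdiag2 T = mat_of_rows_list 4 [[u,v,0,0],[-v,u,0,0],[0,0,u,v],[0,0,-v,u]]"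
    unfolding blockdiag2_def T_def zero2 fb4 by simp
  have J4e: "J4 = mat_of_rows_list 4 [[0,0,-1,0],[0,0,0,-1],[1,0,0,0],[0,1,0,0]]"
    unfolding J4_def zero2 one2 uminus2 fb4 by simp
  have c1: "T \<in> carrier_mat 2 2" unfolding T_def by (rule mat2_carrier)
  have c2: "transpose_mat T * T = 1\<^sub>m 2"
    unfolding T_def transp2 mult2 one2 using uv1 by (simp add: power2_eq_square add.commute)
  have c3: "det T = 1" unfolding T_def det2 using uv1 by (simp add: power2_eq_square add.commute)
  have c4: "transpose_mat (blockdiag2 T) * J4 * blockdiag2 T = J4"
    unfolding bd J4e mol_transpose mol_mult by (simp add: uv1' uv1'' uvm uvm')
  have c5: "blockdiag2 T * B2 m1 m2 m3 th2 th3 e th * transpose_mat (blockdiag2 T)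
                 = B2bar m1 m2 m3 th1 th2 th3 e th" for e th
  proof -
    define kk where "kk = 1 / (1 + e * cos th)"
    define p where "p = kk * (e * cos th + a)"
    define q where "q = kk * b"
    define r where "r = kk * (e * cos th + c)"
    have B2e: "B2 m1 m2 m3 th2 th3 e th = mat_of_rows_list 4 [[1,0,0,1],[0,1,-1,0],[0,-1,p,q],[1,0,q,r]]"
      unfolding B2_def J2_def Dtilde_def lr2[unfolded one2] one2 uminus2 fb4 p_def q_def r_def kk_def a_def b_def c_def
        D1_def D2_def D4_def by simp
    have E1: "p*u^2+2*q*u*v+r*v^2 = (2 * e * cos th - 1 - sqrt (9 - beta m1 m2 m3 th1 th2 th3)) / (2 * (1 + e * cos th))"
    proof -
      have "p*u^2+2*q*u*v+r*v^2 = kk * (e * cos th * (u^2+v^2) + (a*u^2 + 2*b*u*v + c*v^2))"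
        unfolding p_def q_def r_def by (simp add: algebra_simps)
      also have "\<dots> = kk * (e * cos th + (-1 - s)/2)" using uv1 F1 by simp
      finally show ?thesis unfolding kk_def s_def bt_def by (simp add: field_simps)
    qed
    have E2: "p*v^2-2*q*u*v+r*u^2 = (2 * e * cos th - 1 + sqrt (9 - beta m1 m2 m3 th1 th2 th3)) / (2 * (1 + e * cos th))"
    proof -
      have "p*v^2-2*q*u*v+r*u^2 = kk * (e * cos th * (u^2+v^2) + (a*v^2 - 2*b*u*v + c*u^2))"
        unfolding p_def q_def r_def by (simp add: algebra_simps)
      also have "\<dots> = kk * (e * cos th + (-1 + s)/2)" using uv1 F2 by simp
      finally show ?thesis unfolding kk_def s_def bt_def by (simp add: field_simps)
    qed
    have E3: "q*(u^2-v^2)+(r-p)*u*v = 0"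
    proof -
      have "q*(u^2-v^2)+(r-p)*u*v = kk * (b*(u^2-v^2) + (c-a)*u*v)"
        unfolding p_def q_def r_def by (simp add: algebra_simps)
      thus ?thesis using H by simp
    qed
    show ?thesis unfolding bd B2e conj4 E1 E2 E3 uv1 B2bar_def by simp
  qed
  show ?thesis using c1 c2 c3 c4 c5 by blast
qed

end
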